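(* Let $G$ be a group with finite generating set $S$ (with $S=S^{-1}$, $e\notin S$), and suppose there is $R\in\mathbb{N}$ such that $\kappa(g)>0$ for all $g\in G$ with $|g|>R$. Then $G$ is finite.
   Context: For a group $G$ with finite generating set $S$ ($S=S^{-1}$, $e\notin S$), $|x|$ denotes the word length of $x\in G$ with respect to $S$. For $g\in G$ define $\mathrm{Av}(g)=\frac{1}{|S|}\sum_{a\in S}|a^{-1}ga|$, and for $g\neq e$ define the curvature $\kappa(g)=\frac{|g|-\mathrm{Av}(g)}{|g|}$. *)

theory Defs
  imports "HOL-Algebra.Algebra"
begin

definition word_length :: "('a, 'b) monoid_scheme \<Rightarrow> 'a set \<Rightarrow> 'a \<Rightarrow> nat" where
  "word_length G S g =
     (LEAST n. \<exists>ws. set ws \<subseteq> S \<and> length ws = n \<and> foldr (\<lambda>a b. a \<otimes>\<^bsub>G\<^esub> b) ws \<one>\<^bsub>G\<^esub> = g)"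

definition Av :: "('a, 'b) monoid_scheme \<Rightarrow> 'a set \<Rightarrow> 'a \<Rightarrow> real" where
  "Av G S g = (1 / real (card S)) *
     (\<Sum>a\<in>S. real (word_length G S (inv\<^bsub>G\<^esub> a \<otimes>\<^bsub>G\<^esub> g \<otimes>\<^bsub>G\<^esub> a)))"

definition curvature :: "('a, 'b) monoid_scheme \<Rightarrow> 'a set \<Rightarrow> 'a \<Rightarrow> real" where
  "curvature G S g = (real (word_length G S g) - Av G S g) / real (word_length G S g)"

end

theory Submission
  imports Defs
begin

lemma wp_carrier:
  assumes "monoid G" "set ws \<subseteq> carrier G"
  shows "foldr (\<lambda>a b. a \<otimes>\<^bsub>G\<^esub> b) ws \<one>\<^bsub>G\<^esub> \<in> carrier G"
  using assms(2) by (induction ws) (auto intro: monoid.m_closed[OF assms(1)] monoid.one_closed[OF assms(1)])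

lemma wp_mult:
  assumes "monoid G" "set xs \<subseteq> carrier G" "y \<in> carrier G"
  shows "foldr (\<lambda>a b. a \<otimes>\<^bsub>G\<^esub> b) xs y = foldr (\<lambda>a b. a \<otimes>\<^bsub>G\<^esub> b) xs \<one>\<^bsub>G\<^esub> \<otimes>\<^bsub>G\<^esub> y"
  using assms(2)
proof (induction xs)
  case Nil
  then show ?case using assms by (simp add: monoid.l_one)
next
  case (Cons x xs)
  then have "x \<in> carrier G" "set xs \<subseteq> carrier G" by auto
  then show ?case using Cons assms wp_carrier[OF assms(1)]
    by (simp add: monoid.m_assoc)
qed

lemma wp_append:
  assumes "monoid G" "set xs \<subseteq> carrier G" "set ys \<subseteq> carrier G"
  shows "foldr (\<lambda>a b. a \<otimes>\<^bsub>G\<^esub> b) (xs @ ys) \<one>\<^bsub>G\<^esub>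
     = foldr (\<lambda>a b. a \<otimes>\<^bsub>G\<^esub> b) xs \<one>\<^bsub>G\<^esub> \<otimes>\<^bsub>G\<^esub> foldr (\<lambda>a b. a \<otimes>\<^bsub>G\<^esub> b) ys \<one>\<^bsub>G\<^esub>"
  using wp_mult[OF assms(1,2) wp_carrier[OF assms(1,3)]] by simp

lemma word_exists:
  assumes "group G" "S \<subseteq> carrier G" "\<forall>s\<in>S. inv\<^bsub>G\<^esub> s \<in> S" "g \<in> generate G S"
  shows "\<exists>ws. set ws \<subseteq> S \<and> foldr (\<lambda>a b. a \<otimes>\<^bsub>G\<^esub> b) ws \<one>\<^bsub>G\<^esub> = g"
  using assms(4)
proof (induction rule: generate.induct)
  case one
  then show ?case by (intro exI[of _ "[]"]) simp
next
  case (incl h)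
  then show ?case using assms group.is_monoid[OF assms(1)]
    by (intro exI[of _ "[h]"]) (auto simp: monoid.r_one)
next
  case (inv h)
  then show ?case using assms group.is_monoid[OF assms(1)]
    by (intro exI[of _ "[inv\<^bsub>G\<^esub> h]"]) (auto simp: monoid.r_one)
next
  case (eng h1 h2)
  then obtain xs ys where "set xs \<subseteq> S" "foldr (\<lambda>a b. a \<otimes>\<^bsub>G\<^esub> b) xs \<one>\<^bsub>G\<^esub> = h1"
     "set ys \<subseteq> S" "foldr (\<lambda>a b. a \<otimes>\<^bsub>G\<^esub> b) ys \<one>\<^bsub>G\<^esub> = h2" by blast
  then show ?case using assms(2) wp_append[OF group.is_monoid[OF assms(1)], of xs ys]
    by (intro exI[of _ "xs @ ys"]) auto
qed

lemma wl_witness: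
  assumes "\<exists>ws. set ws \<subseteq> S \<and> foldr (\<lambda>a b. a \<otimes>\<^bsub>G\<^esub> b) ws \<one>\<^bsub>G\<^esub> = g"
  shows "\<exists>ws. set ws \<subseteq> S \<and> length ws = word_length G S g \<and> foldr (\<lambda>a b. a \<otimes>\<^bsub>G\<^esub> b) ws \<one>\<^bsub>G\<^esub> = g"
proof -
  from assms obtain ws where "set ws \<subseteq> S \<and> foldr (\<lambda>a b. a \<otimes>\<^bsub>G\<^esub> b) ws \<one>\<^bsub>G\<^esub> = g" by blast
  then have "\<exists>n ws. set ws \<subseteq> S \<and> length ws = n \<and> foldr (\<lambda>a b. a \<otimes>\<^bsub>G\<^esub> b) ws \<one>\<^bsub>G\<^esub> = g" by blast
  from LeastI_ex[OF this] show ?thesis unfolding word_length_def by blast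
qed

lemma wl_le:
  assumes "set ws \<subseteq> S" "foldr (\<lambda>a b. a \<otimes>\<^bsub>G\<^esub> b) ws \<one>\<^bsub>G\<^esub> = g"
  shows "word_length G S g \<le> length ws"
  unfolding word_length_def using assms by (intro Least_le) blast


theorem mainTheorem13:
  fixes G :: "('a, 'b) monoid_scheme" and S :: "'a set"
  assumes "group G"
    and "S \<subseteq> carrier G"
    and "finite S"
    and "generate G S = carrier G"
    and "\<forall>s\<in>S. inv\<^bsub>G\<^esub> s \<in> S"
    and "\<one>\<^bsub>G\<^esub> \<notin> S"
    and "\<exists>R::nat. \<forall>g\<in>carrier G. word_length G S g > R \<longrightarrow> curvature G S g > 0"
  shows "finite (carrier G)"
proof -
  interpret G: group G by fact
  have mon: "monoid G" by (rule G.is_monoid)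
  define L where "L = word_length G S"
  define P where "P = (\<lambda>ws. foldr (\<lambda>a b. a \<otimes>\<^bsub>G\<^esub> b) ws \<one>\<^bsub>G\<^esub>)"
  have ex: "\<exists>ws. set ws \<subseteq> S \<and> P ws = g" if "g \<in> carrier G" for g
    using word_exists[OF assms(1,2,5)] that assms(4) unfolding P_def by blast
  have wit: "\<exists>ws. set ws \<subseteq> S \<and> length ws = L g \<and> P ws = g" if "g \<in> carrier G" for g
    using wl_witness[OF ex[OF that, unfolded P_def]] unfolding P_def L_def by blast
  have le: "L g \<le> length ws" if "set ws \<subseteq> S" "P ws = g" for ws g
    using wl_le[of ws S G g] that unfolding P_def L_def by blast
  have subadd: "L (x \<otimes>\<^bsub>G\<^esub> y) \<le> L x + L y" if xc: "x \<in> carrier G" and yc: "y \<in> carrier G" for x y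
  proof -
    obtain xs where xs: "set xs \<subseteq> S" "length xs = L x" "P xs = x" using wit[OF xc] by blast
    obtain ys where ys: "set ys \<subseteq> S" "length ys = L y" "P ys = y" using wit[OF yc] by blast
    have "P (xs @ ys) = x \<otimes>\<^bsub>G\<^esub> y"
      using wp_append[OF mon, of xs ys] xs ys assms(2) unfolding P_def by auto
    then have "L (x \<otimes>\<^bsub>G\<^esub> y) \<le> length (xs @ ys)" using le xs ys by (metis set_append Un_subset_iff)
    then show ?thesis using xs ys by simp
  qed
  have one: "L a \<le> 1" if "a \<in> S" for a
  proof -
    have "P [a] = a" using that assms(2) unfolding P_def by auto
    then show ?thesis using le[of "[a]" a] that by simp
  qed
  have conj: "L (inv\<^bsub>G\<^esub> a \<otimes>\<^bsub>G\<^esub> g \<otimes>\<^bsub>G\<^esub> a) \<le> L g + 2" if "g \<in> carrier G" "a \<in> S" for g a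
  proof -
    have ac: "a \<in> carrier G" using that assms(2) by auto
    have "L (inv\<^bsub>G\<^esub> a \<otimes>\<^bsub>G\<^esub> g \<otimes>\<^bsub>G\<^esub> a) \<le> L (inv\<^bsub>G\<^esub> a \<otimes>\<^bsub>G\<^esub> g) + L a"
      using subadd ac that by auto
    also have "\<dots> \<le> L (inv\<^bsub>G\<^esub> a) + L g + L a" using subadd ac that by auto
    finally show ?thesis using one[OF that(2)] one[of "inv\<^bsub>G\<^esub> a"] assms(5) that(2) by simp
  qed
  define B where "B = (\<lambda>n. {g \<in> carrier G. L g \<le> n})"
  have finB: "finite (B n)" for n
  proof -
    have "B n \<subseteq> P ` {ws. set ws \<subseteq> S \<and> length ws \<le> n}"
    proof
      fix g assume "g \<in> B n"
      then have g: "g \<in> carrier G" "L g \<le> n" unfolding B_def by auto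
      obtain ws where "set ws \<subseteq> S" "length ws = L g" "P ws = g" using wit[OF g(1)] by blast
      then show "g \<in> P ` {ws. set ws \<subseteq> S \<and> length ws \<le> n}" using g by auto
    qed
    moreover have "finite {ws. set ws \<subseteq> S \<and> length ws \<le> n}"
      by (rule finite_lists_length_le[OF assms(3)])
    ultimately show ?thesis by (meson finite_surj)
  qed
  show ?thesis
  proof (cases "S = {}")
    case True
    have "carrier G \<subseteq> {\<one>\<^bsub>G\<^esub>}"
    proof
      fix g assume "g \<in> carrier G"
      then obtain ws where "set ws \<subseteq> S" "P ws = g" using ex by blast
      then show "g \<in> {\<one>\<^bsub>G\<^esub>}" using True unfolding P_def by auto
    qed
    then show ?thesis using finite_subset by blast
  next
    case False
    define cs where "cs = card S"
    have csp: "cs > 0" unfolding cs_def by (rule card_gt_0_iff[THEN iffD2]) (use False assms(3) in blast)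
    define c where "c = (\<lambda>a g. inv\<^bsub>G\<^esub> a \<otimes>\<^bsub>G\<^esub> g \<otimes>\<^bsub>G\<^esub> a)"
    define D where "D = (\<lambda>g. \<Sum>a\<in>S. L (c a g))"
    obtain R :: nat where R: "\<forall>g\<in>carrier G. L g > R \<longrightarrow> curvature G S g > 0"
      using assms(7) unfolding L_def by blast
    have big: "D g + 1 \<le> cs * L g" if "g \<in> carrier G" "L g > R" for g
    proof -
      have "curvature G S g > 0" using R that by blast
      moreover have pos: "real (L g) > 0" using that by simp
      ultimately have "real (L g) - Av G S g > 0"
        unfolding curvature_def L_def by (simp add: zero_less_divide_iff)
      then have "(1 / real cs) * real (D g) < real (L g)"
        unfolding Av_def D_def c_def cs_def L_def by simp
      then have "real (D g) < real cs * real (L g)" using csp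
        by (simp add: field_simps)
      then have "D g < cs * L g" by (metis of_nat_less_iff of_nat_mult)
      then show ?thesis by simp
    qed
    have small: "D g \<le> cs * L g + 2 * cs" if "g \<in> carrier G" for g
    proof -
      have "D g \<le> (\<Sum>a\<in>S. L g + 2)" unfolding D_def c_def
        by (rule sum_mono) (use conj that in auto)
      then show ?thesis by (simp add: cs_def algebra_simps)
    qed
    have key: "cs * (\<Sum>g\<in>B n. L g) \<le> (\<Sum>g\<in>B n. D g)" for n
    proof -
      define T where "T = B n \<times> S"
      define \<phi> where "\<phi> = (\<lambda>(g, a). (c a g, inv\<^bsub>G\<^esub> a))"
      define f where "f = (\<lambda>p::'a \<times> 'a. L (fst p))"
      have finT: "finite T" unfolding T_def using finB assms(3) by auto
      have inj: "inj_on \<phi> T"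
      proof (rule inj_onI)
        fix p q assume pq: "p \<in> T" "q \<in> T" "\<phi> p = \<phi> q"
        obtain g a where p: "p = (g, a)" by fastforce
        obtain h b where q: "q = (h, b)" by fastforce
        have gc: "g \<in> carrier G" "a \<in> carrier G" "h \<in> carrier G" "b \<in> carrier G"
          using pq p q assms(2) unfolding T_def B_def by auto
        have "inv\<^bsub>G\<^esub> a = inv\<^bsub>G\<^esub> b" using pq p q unfolding \<phi>_def by simp
        then have ab: "a = b" using gc by (metis G.inv_inv)
        have "inv\<^bsub>G\<^esub> a \<otimes>\<^bsub>G\<^esub> g \<otimes>\<^bsub>G\<^esub> a = inv\<^bsub>G\<^esub> a \<otimes>\<^bsub>G\<^esub> h \<otimes>\<^bsub>G\<^esub> a"
          using pq p q ab unfolding \<phi>_def c_def by simp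
        then have "inv\<^bsub>G\<^esub> a \<otimes>\<^bsub>G\<^esub> g = inv\<^bsub>G\<^esub> a \<otimes>\<^bsub>G\<^esub> h"
          using gc G.r_cancel[of a "inv\<^bsub>G\<^esub> a \<otimes>\<^bsub>G\<^esub> g" "inv\<^bsub>G\<^esub> a \<otimes>\<^bsub>G\<^esub> h"] by simp
        then have "g = h" using gc G.l_cancel[of "inv\<^bsub>G\<^esub> a" g h] by simp
        then show "p = q" using p q ab by simp
      qed
      define U where "U = \<phi> ` T"
      have finU: "finite U" unfolding U_def using finT by simp
      have cardU: "card U = card T" unfolding U_def using card_image[OF inj] .
      have e1: "(\<Sum>g\<in>B n. D g) = sum f U"
      proof -
        have "(\<Sum>g\<in>B n. D g) = (\<Sum>(g, a)\<in>T. L (c a g))"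
          unfolding D_def T_def by (simp add: sum.cartesian_product)
        also have "\<dots> = (\<Sum>p\<in>T. f (\<phi> p))"
          by (rule sum.cong) (auto simp: f_def \<phi>_def)
        also have "\<dots> = sum f U" unfolding U_def using sum.reindex[OF inj, of f] by simp
        finally show ?thesis .
      qed
      have e2: "cs * (\<Sum>g\<in>B n. L g) = sum f T"
      proof -
        have "sum f T = (\<Sum>(g, a)\<in>B n \<times> S. L g)"
          unfolding T_def f_def by (simp add: split_def)
        also have "\<dots> = (\<Sum>g\<in>B n. \<Sum>a\<in>S. L g)" by (rule sum.cartesian_product[symmetric])
        finally have "sum f T = (\<Sum>g\<in>B n. \<Sum>a\<in>S. L g)" .
        then show ?thesis by (simp add: cs_def sum_distrib_left mult.commute)
      qed
      have s1: "sum f U = sum f (U \<inter> T) + sum f (U - T)" using finU sum.Int_Diff by blast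
      have s2: "sum f T = sum f (T \<inter> U) + sum f (T - U)" using finT sum.Int_Diff by blast
      have c1: "card (U - T) = card (T - U)"
        using card_Diff_subset_Int[of U T] card_Diff_subset_Int[of T U] finU finT cardU
        by (simp add: Int_commute)
      have b1: "sum f (T - U) \<le> card (T - U) * n"
        using sum_bounded_above[of "T - U" f n] unfolding T_def B_def f_def by auto
      have Ucar: "fst p \<in> carrier G" if "p \<in> U" for p
        using that assms(2) unfolding U_def T_def \<phi>_def c_def B_def by auto
      have b2: "card (U - T) * (n + 1) \<le> sum f (U - T)"
      proof -
        have "\<forall>p\<in>U - T. n + 1 \<le> f p"
        proof
          fix p assume p: "p \<in> U - T"
          have "snd p \<in> S" using p assms(5) unfolding U_def T_def \<phi>_def by auto
          then have "fst p \<notin> B n" using p unfolding T_def by (cases p) auto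
          then show "n + 1 \<le> f p" using Ucar p unfolding B_def f_def by auto
        qed
        then show ?thesis using sum_bounded_below[of "U - T" "n+1" f] by simp
      qed
      have m: "card (T - U) * n \<le> card (U - T) * (n + 1)" using c1 by simp
      have "sum f (U \<inter> T) = sum f (T \<inter> U)" by (simp add: Int_commute)
      then have "sum f T \<le> sum f U"
        using s1 s2 b1 b2 m by linarith
      then show ?thesis using e1 e2 by simp
    qed
    define K where "K = card (B R)"
    have bound: "card (B n) \<le> (2 * cs + 1) * K" for n
    proof -
      define H where "H = {g \<in> B n. L g > R}"
      define Lo where "Lo = {g \<in> B n. L g \<le> R}"
      have fH: "finite H" "finite Lo" unfolding H_def Lo_def using finB by auto
      have "\<forall>g\<in>B n. D g + (if L g > R then 1 else 0) \<le> cs * L g + (if L g \<le> R then 2 * cs else 0)"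
        using big small unfolding B_def by auto
      then have "(\<Sum>g\<in>B n. D g + (if L g > R then 1 else 0)) \<le> (\<Sum>g\<in>B n. cs * L g + (if L g \<le> R then 2 * cs else 0))"
        by (intro sum_mono) auto
      moreover have "(\<Sum>g\<in>B n. (if L g > R then 1 else 0)) = card H"
        using sum.inter_filter[OF finB, of "\<lambda>_. (1::nat)" n "\<lambda>g. L g > R"] unfolding H_def by simp
      moreover have "(\<Sum>g\<in>B n. (if L g \<le> R then 2 * cs else 0)) = 2 * cs * card Lo"
        using sum.inter_filter[OF finB, of "\<lambda>_. 2 * cs" n "\<lambda>g. L g \<le> R"] unfolding Lo_def by (simp add: mult.commute)
      ultimately have "(\<Sum>g\<in>B n. D g) + card H \<le> cs * (\<Sum>g\<in>B n. L g) + 2 * cs * card Lo"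
        by (simp add: sum.distrib sum_distrib_left)
      then have hH: "card H \<le> 2 * cs * card Lo" using key[of n] by linarith
      have "Lo \<subseteq> B R" unfolding Lo_def B_def by auto
      then have "card Lo \<le> K" unfolding K_def using card_mono finB by blast
      moreover have "B n = H \<union> Lo" unfolding H_def Lo_def by auto
      then have "card (B n) \<le> card H + card Lo" using card_Un_le by metis
      moreover have "2 * cs * card Lo \<le> 2 * cs * K" using \<open>card Lo \<le> K\<close> by simp
      moreover have "(2 * cs + 1) * K = 2 * cs * K + K" by simp
      ultimately show ?thesis using hH by linarith
    qed
    show ?thesis
    proof (rule ccontr)
      assume inf: "infinite (carrier G)"
      obtain F where F: "F \<subseteq> carrier G" "finite F" "card F = (2 * cs + 1) * K + 1"
        using infinite_arbitrarily_large[OF inf] by blast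
      have "F \<noteq> {}" using F by auto
      define m where "m = Max (L ` F)"
      have "F \<subseteq> B m" unfolding B_def m_def using F by auto
      then have "card F \<le> card (B m)" using card_mono finB by blast
      then show False using bound[of m] F by simp
    qed
  qed
qed

end
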